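(* Let $G_1=\langle\Sigma_{1,\tau},Q_1,\rightarrow_1,Q_1^0\rangle$ and $G_2=\langle\Sigma_{2,\tau},Q_2,\rightarrow_2,Q_2^0\rangle$ be nondeterministic automata with sets of secret states $Q_1^S$, $Q_2^S$, and equip $G_1\|G_2$ with secret states $Q^S=\{(x_1,x_2)\mid x_1\in Q_1^S\text{ or }x_2\in Q_2^S\}$. Assume $UR(Q_i^0)\not\subseteq Q_i^S$ for $i=1,2$. For $i=1,2$ let $T_i=TPO(det_d(G_i),det(G_i))$ be the largest three-player observer w.r.t. $G_i$, and let $G_i^T$ be the transformed automaton of $T_i$ (with $j\ne i$ the other index). Let $T=TPO(det_d(G_1\|G_2),det(G_1\|G_2))$ be the largest monolithic three-player observer w.r.t. $G_1\|G_2$, and let $\rho$ be the renaming map. Then for every string $s$ over $\Sigma_{G_1^T}\cup\Sigma_{G_2^T}$: if $s$ is defined from the initial state of $G_1^T\|G_2^T$, then $\rho(s)$ labels a path from the initial state of $T$.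
   Context: Automata: a (nondeterministic) automaton $G=\langle\Sigma_\tau,Q,\rightarrow,Q^0\rangle$ has finite observable alphabet $\Sigma$, special unobservable symbol $\tau$, $\Sigma_\tau=\Sigma\cup\{\tau\}$, $\rightarrow\subseteq Q\times\Sigma_\tau\times Q$, initial states $Q^0$. Deterministic: one initial state, no $\tau$-transitions, functional. $p\overset{s}{\Rightarrow}q$ ($s\in\Sigma^*$): a path from $p$ to $q$ whose labels with $\tau$'s deleted spell $s$. $UR(B)=\{q\mid b\overset{\varepsilon}{\Rightarrow}q,\ b\in B\}$. Observer $det(G)$: deterministic over $\Sigma$, initial state $UR(Q^0)$, $X\xrightarrow{\sigma}Y$ iff $Y=UR(\{y\mid x\xrightarrow{\sigma}y,\ x\in X\})\ne\emptyset$, reachable part. Desired observer $det_d(G)$: $det(G)$ with every state $X\subseteq Q^S$ deleted, reachable part kept. Synchronous composition of $A_1$ (alphabet $\Sigma_1$) and $A_2$ (alphabet $\Sigma_2$): state set $Q_1\times Q_2$, initial states $Q_1^0\times Q_2^0$, marked states $Q_1^m\times Q_2^m$ (when marking is present); shared events ($\Sigma_1\cap\Sigma_2$) move both components simultaneously, events in $(\Sigma_1\setminus\Sigma_2)\cup\{\tau\}$ move only the first, events in $(\Sigma_2\setminus\Sigma_1)\cup\{\tau\}$ move only the second. Largest three-player observer $TPO(D,F)$ for deterministic $D=\langle\Sigma,X_D,\rightarrow_D,d_0\rangle$, $F=\langle\Sigma,X_F,\rightarrow_F,f_0\rangle$: with fresh symbol $\epsilon$ and fresh erasure symbols $\Sigma^r=\{\sigma\to\epsilon\mid\sigma\in\Sigma\}$,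 states are $Y$-states $(d,f)$, $Z$-states $Z((d,f),e)$ ($e\in\Sigma$, called the observable component $E$), $W$-states $W((d,f),a)$ ($a\in\Sigma\cup\Sigma^r$, called the action component $A$); initial state $(d_0,f_0)$; only reachable states; transitions exactly: (1) $(d,f)\xrightarrow{e}Z((d,f),e)$ if $e$ defined at $f$ in $F$; (2) $Z((d,f),e)\xrightarrow{\theta}Z((d',f),e)$ for $\theta\in\Sigma$ if $d\xrightarrow{\theta}_Dd'$; (3) $Z((d,f),e)\xrightarrow{\epsilon}W((d,f),e)$ if $e$ defined at $d$ in $D$ and at $f$ in $F$; (4) $Z((d,f),e)\xrightarrow{e\to\epsilon}W((d,f),e\to\epsilon)$ if $e$ defined at $f$ in $F$; (5) $W((d,f),e)\xrightarrow{e}(d',f')$ with $d\xrightarrow{e}_Dd'$, $f\xrightarrow{e}_Ff'$; (6) $W((d,f),e\to\epsilon)\xrightarrow{e}(d,f')$ with $f\xrightarrow{e}_Ff'$. Transformed automaton: for $T_i=TPO(D_i,F_i)$ over alphabet $\Sigma_i$ and the other index $j$, introduce fresh formal symbols $\theta_e$ (for $\theta\in\Sigma_i\cup\Sigma_j\cup\{\epsilon\}\cup\Sigma_i^r\cup\Sigma_j^r$, $e\in\Sigma_i\cup\Sigma_j$) and $\sigma_{a,w}$ (for $\sigma$ an event and $a$ an event or erasure symbol), all distinct from each other and from events. Let $E_i$ be the set of observable components of $Z$-states of $T_i$ and $A_i$ the set of action components of $W$-states of $T_i$. $G_i^T$ is the deterministic automaton with the same states as $T_i$, initial state the initial $Y$-state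 of $T_i$, marked states all $Y$-states, and transitions: (a) $y\xrightarrow{e}z$ for each transition $y\xrightarrow{e}z$ of $T_i$ out of a $Y$-state; (b) $z\xrightarrow{\theta_e}q$ for each transition $z\xrightarrow{\theta}q$ of $T_i$ out of a $Z$-state $z$ with observable component $e$; (c) $w\xrightarrow{e_{a,w}}y$ for each transition $w\xrightarrow{e}y$ of $T_i$ out of a $W$-state $w$ with action component $a$; (d) a self-loop $y\xrightarrow{\alpha}y$ at every $Y$-state $y$ for every $\alpha\in\Sigma_j\setminus\Sigma_i$. Its alphabet is $\Sigma_{G_i^T}=\Sigma_i\cup(\Sigma_j\setminus\Sigma_i)\cup\{\theta_e\mid\theta\in\Sigma_i\cup\{\epsilon\}\cup\Sigma_i^r,\ e\in E_i\}\cup\{\sigma_{a,w}\mid\sigma\in\Sigma_i,\ a\in A_i\}\cup\{\beta_\alpha,\ \beta_{\alpha,w},\ \beta_{\alpha\to\epsilon,w}\mid\beta\in\Sigma_i\cap\Sigma_j,\ \alpha\in\Sigma_j\setminus\Sigma_i\}$. Renaming: $\rho$ maps each event $e$ to $e$, each $\theta_e$ to $\theta$, and each $\sigma_{a,w}$ to $\sigma$, extended letter-by-letter to strings. *)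

theory Defs
  imports Main
begin

text \<open>Transition labels are of type 'e option: None is the unobservable symbol tau,
  Some a is the observable event a.\<close>

record ('q, 'e) nfa =
  alph   :: "'e set"
  states :: "'q set"
  trans  :: "('q \<times> 'e option \<times> 'q) set"
  init   :: "'q set"

definition wf_nfa :: "('q, 'e) nfa \<Rightarrow> bool" where
  "wf_nfa G \<longleftrightarrow> finite (alph G) \<and> finite (states G) \<and> init G \<subseteq> states G \<and>
     (\<forall>p l q. (p, l, q) \<in> trans G \<longrightarrow>
        p \<in> states G \<and> q \<in> states G \<and> (l = None \<or> (\<exists>a \<in> alph G. l = Some a)))"

inductive nfa_run :: "('q, 'e) nfa \<Rightarrow> 'q \<Rightarrow> 'e list \<Rightarrow> 'q \<Rightarrow> bool" for G where
  run_nil:  "nfa_run G p [] p"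
| run_tau:  "(p, None, p') \<in> trans G \<Longrightarrow> nfa_run G p' w q \<Longrightarrow> nfa_run G p w q"
| run_ev:   "(p, Some a, p') \<in> trans G \<Longrightarrow> nfa_run G p' w q \<Longrightarrow> nfa_run G p (a # w) q"

definition UR :: "('q, 'e) nfa \<Rightarrow> 'q set \<Rightarrow> 'q set" where
  "UR G B = {q. \<exists>b \<in> B. nfa_run G b [] q}"

definition sync :: "('q1, 'e) nfa \<Rightarrow> ('q2, 'e) nfa \<Rightarrow> ('q1 \<times> 'q2, 'e) nfa" where
  "sync G1 G2 = \<lparr> alph = alph G1 \<union> alph G2,
     states = states G1 \<times> states G2,
     trans =
       {((p1, p2), Some a, (q1, q2)) | p1 p2 a q1 q2.
          a \<in> alph G1 \<inter> alph G2 \<and> (p1, Some a, q1) \<in> trans G1 \<and> (p2, Some a, q2) \<in> trans G2}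
     \<union> {((p1, p2), l, (q1, p2)) | p1 p2 l q1.
          (l = None \<or> (\<exists>a. l = Some a \<and> a \<in> alph G1 - alph G2)) \<and>
          (p1, l, q1) \<in> trans G1 \<and> p2 \<in> states G2}
     \<union> {((p1, p2), l, (p1, q2)) | p1 p2 l q2.
          (l = None \<or> (\<exists>a. l = Some a \<and> a \<in> alph G2 - alph G1)) \<and>
          (p2, l, q2) \<in> trans G2 \<and> p1 \<in> states G1},
     init = init G1 \<times> init G2 \<rparr>"

text \<open>A deterministic automaton over an alphabet: initial state and partial transition
  function (None = undefined). Only the part reachable from the initial state matters.\<close>
record ('x, 'e) dfa =
  dalph :: "'e set"
  dinit :: 'x
  dtr   :: "'x \<Rightarrow> 'e \<Rightarrow> 'x option"

definition det :: "('q, 'e) nfa \<Rightarrow> ('q set, 'e) dfa" where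
  "det G = \<lparr> dalph = alph G,
     dinit = UR G (init G),
     dtr = (\<lambda>X \<sigma>. let Y = UR G {y. \<exists>x \<in> X. (x, Some \<sigma>, y) \<in> trans G}
                 in if \<sigma> \<in> alph G \<and> Y \<noteq> {} then Some Y else None) \<rparr>"

text \<open>Desired observer: states X \<subseteq> QS deleted (the initial state UR(Q0) is kept; under the
  hypotheses of the theorem it is never a subset of the secret states).\<close>
definition det_d :: "('q, 'e) nfa \<Rightarrow> 'q set \<Rightarrow> ('q set, 'e) dfa" where
  "det_d G QS = \<lparr> dalph = alph G,
     dinit = UR G (init G),
     dtr = (\<lambda>X \<sigma>. if X \<subseteq> QS then None else
                 (case dtr (det G) X \<sigma> of
                    None \<Rightarrow> None
                  | Some Y \<Rightarrow> (if Y \<subseteq> QS then None else Some Y))) \<rparr>"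

text \<open>Action components: an event e or an erasure symbol e \<rightarrow> epsilon.\<close>
datatype 'e act = Act 'e | Era 'e

datatype 'e tlab = TEv 'e | TEps | TEra 'e

datatype ('x, 'y, 'e) tpo_state = YS 'x 'y | ZS 'x 'y 'e | WS 'x 'y "'e act"

inductive tpo_step :: "('x, 'e) dfa \<Rightarrow> ('y, 'e) dfa \<Rightarrow>
    ('x, 'y, 'e) tpo_state \<Rightarrow> 'e tlab \<Rightarrow> ('x, 'y, 'e) tpo_state \<Rightarrow> bool" for D F where
  t1: "dtr F f e \<noteq> None \<Longrightarrow> tpo_step D F (YS d f) (TEv e) (ZS d f e)"
| t2: "dtr D d \<theta> = Some d' \<Longrightarrow> tpo_step D F (ZS d f e) (TEv \<theta>) (ZS d' f e)"
| t3: "dtr D d e \<noteq> None \<Longrightarrow> dtr F f e \<noteq> None \<Longrightarrow> tpo_step D F (ZS d f e) TEps (WS d f (Act e))"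
| t4: "dtr F f e \<noteq> None \<Longrightarrow> tpo_step D F (ZS d f e) (TEra e) (WS d f (Era e))"
| t5: "dtr D d e = Some d' \<Longrightarrow> dtr F f e = Some f' \<Longrightarrow>
        tpo_step D F (WS d f (Act e)) (TEv e) (YS d' f')"
| t6: "dtr F f e = Some f' \<Longrightarrow> tpo_step D F (WS d f (Era e)) (TEv e) (YS d f')"

definition tpo_init :: "('x, 'e) dfa \<Rightarrow> ('y, 'e) dfa \<Rightarrow> ('x, 'y, 'e) tpo_state" where
  "tpo_init D F = YS (dinit D) (dinit F)"

inductive tpo_reach :: "('x, 'e) dfa \<Rightarrow> ('y, 'e) dfa \<Rightarrow> ('x, 'y, 'e) tpo_state \<Rightarrow> bool"
  for D F where
  r_init: "tpo_reach D F (tpo_init D F)"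
| r_step: "tpo_reach D F q \<Longrightarrow> tpo_step D F q l q' \<Longrightarrow> tpo_reach D F q'"

inductive tpo_run :: "('x, 'e) dfa \<Rightarrow> ('y, 'e) dfa \<Rightarrow>
    ('x, 'y, 'e) tpo_state \<Rightarrow> 'e tlab list \<Rightarrow> ('x, 'y, 'e) tpo_state \<Rightarrow> bool" for D F where
  tr_nil:  "tpo_run D F q [] q"
| tr_cons: "tpo_step D F q l q' \<Longrightarrow> tpo_run D F q' w r \<Longrightarrow> tpo_run D F q (l # w) r"

definition tpo_E :: "('x, 'e) dfa \<Rightarrow> ('y, 'e) dfa \<Rightarrow> 'e set" where
  "tpo_E D F = {e. \<exists>d f. tpo_reach D F (ZS d f e)}"

definition tpo_A :: "('x, 'e) dfa \<Rightarrow> ('y, 'e) dfa \<Rightarrow> 'e act set" where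
  "tpo_A D F = {a. \<exists>d f. tpo_reach D F (WS d f a)}"

text \<open>Symbols of the transformed automata: events e, formal symbols theta_e (GTh theta e,
  theta an event, epsilon or erasure symbol), and formal symbols sigma_{a,w} (GSa sigma a).\<close>
datatype 'e gsym = GEv 'e | GTh "'e tlab" 'e | GSa 'e "'e act"

definition transformed ::
  "('x, 'e) dfa \<Rightarrow> ('y, 'e) dfa \<Rightarrow> 'e set \<Rightarrow> 'e set \<Rightarrow> (('x, 'y, 'e) tpo_state, 'e gsym) nfa" where
  "transformed D F Si Sj = \<lparr>
     alph = GEv ` (Si \<union> (Sj - Si))
       \<union> {GTh \<theta> e | \<theta> e. (\<theta> \<in> TEv ` Si \<or> \<theta> = TEps \<or> \<theta> \<in> TEra ` Si) \<and> e \<in> tpo_E D F}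
       \<union> {GSa \<sigma> a | \<sigma> a. \<sigma> \<in> Si \<and> a \<in> tpo_A D F}
       \<union> {GTh (TEv \<beta>) \<alpha> | \<beta> \<alpha>. \<beta> \<in> Si \<inter> Sj \<and> \<alpha> \<in> Sj - Si}
       \<union> {GSa \<beta> (Act \<alpha>) | \<beta> \<alpha>. \<beta> \<in> Si \<inter> Sj \<and> \<alpha> \<in> Sj - Si}
       \<union> {GSa \<beta> (Era \<alpha>) | \<beta> \<alpha>. \<beta> \<in> Si \<inter> Sj \<and> \<alpha> \<in> Sj - Si},
     states = {q. tpo_reach D F q},
     trans =
         {(YS d f, Some (GEv e), z) | d f e z.
            tpo_reach D F (YS d f) \<and> tpo_step D F (YS d f) (TEv e) z}
       \<union> {(ZS d f e, Some (GTh \<theta> e), q) | d f e \<theta> q.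
            tpo_reach D F (ZS d f e) \<and> tpo_step D F (ZS d f e) \<theta> q}
       \<union> {(WS d f a, Some (GSa e a), y) | d f a e y.
            tpo_reach D F (WS d f a) \<and> tpo_step D F (WS d f a) (TEv e) y}
       \<union> {(YS d f, Some (GEv \<alpha>), YS d f) | d f \<alpha>.
            tpo_reach D F (YS d f) \<and> \<alpha> \<in> Sj - Si},
     init = {tpo_init D F} \<rparr>"

fun rho :: "'e gsym \<Rightarrow> 'e tlab" where
  "rho (GEv e) = TEv e"
| "rho (GTh \<theta> e) = \<theta>"
| "rho (GSa \<sigma> a) = TEv \<sigma>"

end

theory Submission
  imports Defs
begin


lemma run_states: "nfa_run G p w q \<Longrightarrow> wf_nfa G \<Longrightarrow> p \<in> states G \<Longrightarrow> q \<in> states G"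
  by (induction rule: nfa_run.induct) (auto simp: wf_nfa_def)

lemma run_app: "nfa_run G p u q \<Longrightarrow> nfa_run G q v r \<Longrightarrow> nfa_run G p (u@v) r"
  by (induction rule: nfa_run.induct) (auto intro: nfa_run.intros)

lemma UR_idem: "UR G (UR G B) = UR G B"
proof
  show "UR G (UR G B) \<subseteq> UR G B"
    unfolding UR_def using run_app[where u="[]" and v="[]" and G=G] by fastforce
  show "UR G B \<subseteq> UR G (UR G B)"
    unfolding UR_def by (auto intro: nfa_run.intros)
qed

lemma UR_sub: "B \<subseteq> UR G B"
  unfolding UR_def by (auto intro: nfa_run.intros)

lemma UR_states: "wf_nfa G \<Longrightarrow> B \<subseteq> states G \<Longrightarrow> UR G B \<subseteq> states G"
  unfolding UR_def using run_states[of G _ "[]"] by (auto simp del: )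

lemma sync_tau_run: "nfa_run (sync G1 G2) p w q \<Longrightarrow> w = [] \<Longrightarrow>
   nfa_run G1 (fst p) [] (fst q) \<and> nfa_run G2 (snd p) [] (snd q)"
proof (induction rule: nfa_run.induct)
  case (run_nil p) then show ?case by (simp add: nfa_run.run_nil)
next
  case (run_tau p p' w q)
  then show ?case unfolding sync_def by (auto intro: nfa_run.intros)
next
  case (run_ev p a p' w q) then show ?case by simp
qed

lemma sync_lift1: "nfa_run G1 p1 w q1 \<Longrightarrow> w = [] \<Longrightarrow> p2 \<in> states G2 \<Longrightarrow>
   nfa_run (sync G1 G2) (p1,p2) [] (q1,p2)"
proof (induction rule: nfa_run.induct)
  case (run_nil p) then show ?case by (simp add: nfa_run.run_nil)
next
  case (run_tau p p' w q)
  have "((p,p2), None, (p',p2)) \<in> trans (sync G1 G2)" using run_tau by (auto simp: sync_def)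
  then show ?case using run_tau nfa_run.run_tau by metis
next
  case (run_ev p a p' w q) then show ?case by simp
qed

lemma sync_lift2: "nfa_run G2 p2 w q2 \<Longrightarrow> w = [] \<Longrightarrow> p1 \<in> states G1 \<Longrightarrow>
   nfa_run (sync G1 G2) (p1,p2) [] (p1,q2)"
proof (induction rule: nfa_run.induct)
  case (run_nil p) then show ?case by (simp add: nfa_run.run_nil)
next
  case (run_tau p p' w q)
  have "((p1,p), None, (p1,p')) \<in> trans (sync G1 G2)" using run_tau by (auto simp: sync_def)
  then show ?case using run_tau nfa_run.run_tau by metis
next
  case (run_ev p a p' w q) then show ?case by simp
qed

lemma UR_sync:
  assumes "wf_nfa G1" "wf_nfa G2" "A \<subseteq> states G1" "B \<subseteq> states G2"
  shows "UR (sync G1 G2) (A \<times> B) = UR G1 A \<times> UR G2 B"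
proof
  show "UR (sync G1 G2) (A \<times> B) \<subseteq> UR G1 A \<times> UR G2 B"
    unfolding UR_def using sync_tau_run by fastforce
next
  show "UR G1 A \<times> UR G2 B \<subseteq> UR (sync G1 G2) (A \<times> B)"
  proof clarify
    fix a b assume a: "a \<in> UR G1 A" and b: "b \<in> UR G2 B"
    then obtain a0 b0 where a0: "a0 \<in> A" "nfa_run G1 a0 [] a" and b0: "b0 \<in> B" "nfa_run G2 b0 [] b"
      unfolding UR_def by blast
    have "a \<in> states G1" using run_states[OF a0(2) assms(1)] a0(1) assms(3) by blast
    then have "nfa_run (sync G1 G2) (a0,b0) [] (a,b)"
      using run_app[OF sync_lift1[OF a0(2) refl] sync_lift2[OF b0(2) refl]] b0(1) assms(4) by auto
    then show "(a,b) \<in> UR (sync G1 G2) (A \<times> B)" unfolding UR_def using a0 b0 by blast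
  qed
qed

definition post :: "('q, 'e) nfa \<Rightarrow> 'q set \<Rightarrow> 'e \<Rightarrow> 'q set" where
  "post G X \<sigma> = {y. \<exists>x \<in> X. (x, Some \<sigma>, y) \<in> trans G}"

lemma post_states: "wf_nfa G \<Longrightarrow> post G X \<sigma> \<subseteq> states G"
  unfolding post_def wf_nfa_def by blast

lemma post_sync_shared: "\<sigma> \<in> alph G1 \<Longrightarrow> \<sigma> \<in> alph G2 \<Longrightarrow>
   post (sync G1 G2) (A \<times> B) \<sigma> = post G1 A \<sigma> \<times> post G2 B \<sigma>"
  unfolding post_def sync_def by auto

lemma post_sync_1: "\<sigma> \<in> alph G1 \<Longrightarrow> \<sigma> \<notin> alph G2 \<Longrightarrow> B \<subseteq> states G2 \<Longrightarrow>
   post (sync G1 G2) (A \<times> B) \<sigma> = post G1 A \<sigma> \<times> B"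
  unfolding post_def sync_def by (auto 4 4)

lemma post_sync_2: "\<sigma> \<in> alph G2 \<Longrightarrow> \<sigma> \<notin> alph G1 \<Longrightarrow> A \<subseteq> states G1 \<Longrightarrow>
   post (sync G1 G2) (A \<times> B) \<sigma> = A \<times> post G2 B \<sigma>"
  unfolding post_def sync_def by (auto 4 4)

lemma det_Some: "dtr (det G) X \<sigma> = Some Y \<longleftrightarrow> \<sigma> \<in> alph G \<and> Y = UR G (post G X \<sigma>) \<and> Y \<noteq> {}"
  unfolding det_def post_def by (auto simp: Let_def)

lemma det_None: "dtr (det G) X \<sigma> \<noteq> None \<longleftrightarrow> (\<exists>Y. dtr (det G) X \<sigma> = Some Y)"
  by auto

lemma detd_Some: "dtr (det_d G QS) X \<sigma> = Some Y \<longleftrightarrow> \<not> X \<subseteq> QS \<and> dtr (det G) X \<sigma> = Some Y \<and> \<not> Y \<subseteq> QS"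
  unfolding det_d_def by (auto split: option.splits)

lemma QS_prod: "(A \<times> B \<subseteq> {(x1, x2). x1 \<in> QS1 \<or> x2 \<in> QS2}) \<longleftrightarrow> (A \<subseteq> QS1 \<or> B \<subseteq> QS2)"
  by auto

lemma det_sync_shared:
  assumes "wf_nfa G1" "wf_nfa G2" "dtr (det G1) f1 \<sigma> = Some f1'" "dtr (det G2) f2 \<sigma> = Some f2'"
  shows "dtr (det (sync G1 G2)) (f1 \<times> f2) \<sigma> = Some (f1' \<times> f2')"
  using assms post_states[OF assms(1)] post_states[OF assms(2)]
  by (auto simp: det_Some post_sync_shared UR_sync) (auto simp: sync_def)

lemma det_sync_1:
  assumes "wf_nfa G1" "wf_nfa G2" "dtr (det G1) f1 \<sigma> = Some f1'" "\<sigma> \<notin> alph G2"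
    "f2 \<subseteq> states G2" "UR G2 f2 = f2" "f2 \<noteq> {}"
  shows "dtr (det (sync G1 G2)) (f1 \<times> f2) \<sigma> = Some (f1' \<times> f2)"
  using assms post_states[OF assms(1)]
  by (auto simp: det_Some post_sync_1 UR_sync) (auto simp: sync_def)

lemma det_sync_2:
  assumes "wf_nfa G1" "wf_nfa G2" "dtr (det G2) f2 \<sigma> = Some f2'" "\<sigma> \<notin> alph G1"
    "f1 \<subseteq> states G1" "UR G1 f1 = f1" "f1 \<noteq> {}"
  shows "dtr (det (sync G1 G2)) (f1 \<times> f2) \<sigma> = Some (f1 \<times> f2')"
  using assms post_states[OF assms(2)]
  by (auto simp: det_Some post_sync_2 UR_sync) (auto simp: sync_def)

lemma detd_sync_shared:
  assumes "wf_nfa G1" "wf_nfa G2" "dtr (det_d G1 QS1) f1 \<sigma> = Some f1'" "dtr (det_d G2 QS2) f2 \<sigma> = Some f2'"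
  shows "dtr (det_d (sync G1 G2) {(x1, x2). x1 \<in> QS1 \<or> x2 \<in> QS2}) (f1 \<times> f2) \<sigma> = Some (f1' \<times> f2')"
  using assms det_sync_shared[OF assms(1,2)] by (simp add: detd_Some QS_prod)

lemma detd_sync_1:
  assumes "wf_nfa G1" "wf_nfa G2" "dtr (det_d G1 QS1) f1 \<sigma> = Some f1'" "\<sigma> \<notin> alph G2"
    "f2 \<subseteq> states G2" "UR G2 f2 = f2" "\<not> f2 \<subseteq> QS2"
  shows "dtr (det_d (sync G1 G2) {(x1, x2). x1 \<in> QS1 \<or> x2 \<in> QS2}) (f1 \<times> f2) \<sigma> = Some (f1' \<times> f2)"
proof -
  have "\<not> f1 \<subseteq> QS1" "dtr (det G1) f1 \<sigma> = Some f1'" "\<not> f1' \<subseteq> QS1" using assms(3) by (auto simp: detd_Some)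
  then show ?thesis using assms det_sync_1[OF assms(1,2), of f1 \<sigma> f1' f2] by (auto simp add: detd_Some QS_prod)
qed

lemma detd_sync_2:
  assumes "wf_nfa G1" "wf_nfa G2" "dtr (det_d G2 QS2) f2 \<sigma> = Some f2'" "\<sigma> \<notin> alph G1"
    "f1 \<subseteq> states G1" "UR G1 f1 = f1" "\<not> f1 \<subseteq> QS1"
  shows "dtr (det_d (sync G1 G2) {(x1, x2). x1 \<in> QS1 \<or> x2 \<in> QS2}) (f1 \<times> f2) \<sigma> = Some (f1 \<times> f2')"
proof -
  have "\<not> f2 \<subseteq> QS2" "dtr (det G2) f2 \<sigma> = Some f2'" "\<not> f2' \<subseteq> QS2" using assms(3) by (auto simp: detd_Some)
  then show ?thesis using assms det_sync_2[OF assms(1,2), of f2 \<sigma> f2' f1] by (auto simp add: detd_Some QS_prod)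
qed



fun dc :: "('x,'y,'e) tpo_state \<Rightarrow> 'x" where
  "dc (YS d f) = d" | "dc (ZS d f e) = d" | "dc (WS d f a) = d"
fun fc :: "('x,'y,'e) tpo_state \<Rightarrow> 'y" where
  "fc (YS d f) = f" | "fc (ZS d f e) = f" | "fc (WS d f a) = f"
fun aev :: "'e act \<Rightarrow> 'e" where
  "aev (Act e) = e" | "aev (Era e) = e"

definition goodD :: "('q,'e) nfa \<Rightarrow> 'q set \<Rightarrow> 'q set \<Rightarrow> bool" where
  "goodD G QS d \<longleftrightarrow> d \<subseteq> states G \<and> UR G d = d \<and> \<not> d \<subseteq> QS"
definition goodF :: "('q,'e) nfa \<Rightarrow> 'q set \<Rightarrow> bool" where
  "goodF G f \<longleftrightarrow> f \<subseteq> states G \<and> UR G f = f \<and> f \<noteq> {}"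

lemma det_good: "dtr (det G) X \<sigma> = Some Y \<Longrightarrow> wf_nfa G \<Longrightarrow> goodF G Y"
  unfolding goodF_def det_Some using UR_states post_states UR_idem by metis

lemma detd_good: "dtr (det_d G QS) X \<sigma> = Some Y \<Longrightarrow> wf_nfa G \<Longrightarrow> goodD G QS Y"
  unfolding goodD_def detd_Some using det_good[of G X \<sigma> Y] unfolding goodF_def by blast

lemma det_alph: "dtr (det G) X \<sigma> \<noteq> None \<Longrightarrow> \<sigma> \<in> alph G"
  unfolding det_def by (auto simp: Let_def split: if_splits)

lemma detd_alph: "dtr (det_d G QS) X \<sigma> \<noteq> None \<Longrightarrow> \<sigma> \<in> alph G"
proof -
  assume "dtr (det_d G QS) X \<sigma> \<noteq> None"
  then obtain Y where "dtr (det_d G QS) X \<sigma> = Some Y" by blast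
  then have "dtr (det G) X \<sigma> = Some Y" by (simp add: detd_Some)
  then show ?thesis using det_alph by (metis option.distinct(1))
qed

lemma reach_good:
  assumes "tpo_reach (det_d G QS) (det G) q" "wf_nfa G" "\<not> UR G (init G) \<subseteq> QS"
  shows "goodD G QS (dc q) \<and> goodF G (fc q)"
  using assms(1)
proof (induction rule: tpo_reach.induct)
  case r_init
  have "init G \<subseteq> states G" using assms(2) unfolding wf_nfa_def by blast
  then have "UR G (init G) \<subseteq> states G" using UR_states assms(2) by blast
  then show ?case using assms(3) UR_idem[of G "init G"]
    by (auto simp: tpo_init_def det_d_def det_def goodD_def goodF_def)
next
  case (r_step q l q')
  from r_step(2) r_step(3) show ?case
    by (cases rule: tpo_step.cases) (auto dest: det_good[OF _ assms(2)] detd_good[OF _ assms(2)])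
qed

lemma alph_GEv: "GEv e \<in> alph (transformed D F Si Sj) \<longleftrightarrow> e \<in> Si \<union> Sj"
  unfolding transformed_def by auto

lemma alph_GTh1: "(\<theta> \<in> TEv ` Si \<or> \<theta> = TEps \<or> \<theta> \<in> TEra ` Si) \<Longrightarrow> tpo_reach D F (ZS d f e) \<Longrightarrow>
   GTh \<theta> e \<in> alph (transformed D F Si Sj)"
  unfolding transformed_def tpo_E_def by auto

lemma alph_GTh2: "\<beta> \<in> Si \<Longrightarrow> \<beta> \<in> Sj \<Longrightarrow> \<alpha> \<in> Sj \<Longrightarrow> \<alpha> \<notin> Si \<Longrightarrow>
   GTh (TEv \<beta>) \<alpha> \<in> alph (transformed D F Si Sj)"
  unfolding transformed_def by auto

lemma alph_GSa: "\<sigma> \<in> Si \<Longrightarrow> tpo_reach D F (WS d f a) \<Longrightarrow> GSa \<sigma> a \<in> alph (transformed D F Si Sj)"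
  unfolding transformed_def tpo_A_def by auto

lemma trans_T_None: "(q, None, q') \<notin> trans (transformed D F Si Sj)"
  unfolding transformed_def by auto

lemma trans_T_YS: "(YS d f, Some x, q') \<in> trans (transformed D F Si Sj) \<longleftrightarrow>
  tpo_reach D F (YS d f) \<and> (\<exists>e. x = GEv e \<and> (tpo_step D F (YS d f) (TEv e) q' \<or> (q' = YS d f \<and> e \<in> Sj \<and> e \<notin> Si)))"
  unfolding transformed_def by auto

lemma trans_T_ZS: "(ZS d f e, Some x, q') \<in> trans (transformed D F Si Sj) \<longleftrightarrow>
  tpo_reach D F (ZS d f e) \<and> (\<exists>\<theta>. x = GTh \<theta> e \<and> tpo_step D F (ZS d f e) \<theta> q')"
  unfolding transformed_def by auto

lemma trans_T_WS: "(WS d f a, Some x, q') \<in> trans (transformed D F Si Sj) \<longleftrightarrow>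
  tpo_reach D F (WS d f a) \<and> (\<exists>e. x = GSa e a \<and> tpo_step D F (WS d f a) (TEv e) q')"
  unfolding transformed_def by auto

lemma sync_trans_Some: "((p1,p2), Some x, (q1,q2)) \<in> trans (sync A B) \<longleftrightarrow>
  (x \<in> alph A \<and> x \<in> alph B \<and> (p1,Some x,q1)\<in>trans A \<and> (p2,Some x,q2) \<in> trans B) \<or>
  (x \<in> alph A \<and> x \<notin> alph B \<and> (p1, Some x, q1) \<in> trans A \<and> q2 = p2 \<and> p2 \<in> states B) \<or>
  (x \<in> alph B \<and> x \<notin> alph A \<and> (p2,Some x,q2) \<in> trans B \<and> q1 = p1 \<and> p1 \<in> states A)"
  unfolding sync_def by auto

lemma sync_trans_None: "(p, None, q) \<in> trans (sync A B) \<Longrightarrow>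
  (fst p, None, fst q) \<in> trans A \<or> (snd p, None, snd q) \<in> trans B"
  unfolding sync_def by auto



lemma step_YS: "tpo_step D F (YS d f) l q \<longleftrightarrow> (\<exists>e. l = TEv e \<and> q = ZS d f e \<and> dtr F f e \<noteq> None)"
  by (auto elim: tpo_step.cases intro: tpo_step.intros)
lemma step_ZS: "tpo_step D F (ZS d f e) l q \<longleftrightarrow>
   (\<exists>\<theta> d'. l = TEv \<theta> \<and> dtr D d \<theta> = Some d' \<and> q = ZS d' f e) \<or>
   (l = TEps \<and> q = WS d f (Act e) \<and> dtr D d e \<noteq> None \<and> dtr F f e \<noteq> None) \<or>
   (l = TEra e \<and> q = WS d f (Era e) \<and> dtr F f e \<noteq> None)"
  by (auto elim: tpo_step.cases intro: tpo_step.intros)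
lemma step_WS: "tpo_step D F (WS d f a) l q \<longleftrightarrow>
   (\<exists>e d' f'. a = Act e \<and> l = TEv e \<and> dtr D d e = Some d' \<and> dtr F f e = Some f' \<and> q = YS d' f') \<or>
   (\<exists>e f'. a = Era e \<and> l = TEv e \<and> dtr F f e = Some f' \<and> q = YS d f')"
  by (auto elim: tpo_step.cases intro: tpo_step.intros)

lemma trans_T_reach: "(q, Some x, q') \<in> trans (transformed D F Si Sj) \<Longrightarrow> tpo_reach D F q'"
  unfolding transformed_def by (auto intro: tpo_reach.r_step)

lemma det_alphS: "dtr (det G) X \<sigma> = Some Y \<Longrightarrow> \<sigma> \<in> alph G"
  using det_alph by fastforce
lemma detd_alphS: "dtr (det_d G QS) X \<sigma> = Some Y \<Longrightarrow> \<sigma> \<in> alph G"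
  using detd_alph by fastforce

lemma sync_reach:
  assumes "((q1,q2), Some x, (q1',q2')) \<in> trans (sync (transformed Da Fa S1 S2) (transformed Db Fb S3 S4))"
    "tpo_reach Da Fa q1" "tpo_reach Db Fb q2"
  shows "tpo_reach Da Fa q1' \<and> tpo_reach Db Fb q2'"
proof -
  note t = trans_T_reach[of q1 x q1' Da Fa S1 S2] trans_T_reach[of q2 x q2' Db Fb S3 S4]
  show ?thesis using assms(1) unfolding sync_trans_Some
    apply (elim disjE conjE)
    using t assms(2,3) by auto
qed

fun shape :: "'e set \<Rightarrow> 'e set \<Rightarrow> ('x,'y,'e) tpo_state \<Rightarrow> ('x','y','e) tpo_state \<Rightarrow> bool" where
  "shape S1 S2 (YS _ _) (YS _ _) = True"
| "shape S1 S2 (ZS _ _ e) (ZS _ _ e') = (e = e' \<and> e \<in> S1 \<and> e \<in> S2)"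
| "shape S1 S2 (ZS _ _ e) (YS _ _) = (e \<in> S1 \<and> e \<notin> S2)"
| "shape S1 S2 (YS _ _) (ZS _ _ e) = (e \<in> S2 \<and> e \<notin> S1)"
| "shape S1 S2 (WS _ _ a) (WS _ _ a') = (a = a' \<and> aev a \<in> S1 \<and> aev a \<in> S2)"
| "shape S1 S2 (WS _ _ a) (YS _ _) = (aev a \<in> S1 \<and> aev a \<notin> S2)"
| "shape S1 S2 (YS _ _) (WS _ _ a) = (aev a \<in> S2 \<and> aev a \<notin> S1)"
| "shape S1 S2 _ _ = False"

fun comb :: "('a set,'b set,'e) tpo_state \<Rightarrow> ('c set,'d set,'e) tpo_state \<Rightarrow> (('a \<times> 'c) set, ('b \<times> 'd) set, 'e) tpo_state" where
  "comb (YS d1 f1) q2 = (case q2 of YS d2 f2 \<Rightarrow> YS (d1 \<times> d2) (f1 \<times> f2)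
      | ZS d2 f2 e \<Rightarrow> ZS (d1 \<times> d2) (f1 \<times> f2) e | WS d2 f2 a \<Rightarrow> WS (d1 \<times> d2) (f1 \<times> f2) a)"
| "comb (ZS d1 f1 e) q2 = ZS (d1 \<times> dc q2) (f1 \<times> fc q2) e"
| "comb (WS d1 f1 a) q2 = WS (d1 \<times> dc q2) (f1 \<times> fc q2) a"

locale ctx =
  fixes G1 :: "('q1, 'e) nfa" and G2 :: "('q2, 'e) nfa"
    and QS1 :: "'q1 set" and QS2 :: "'q2 set"
  assumes wf1: "wf_nfa G1" and wf2: "wf_nfa G2"
    and nsec1: "\<not> UR G1 (init G1) \<subseteq> QS1"
    and nsec2: "\<not> UR G2 (init G2) \<subseteq> QS2"
begin

abbreviation "D1 \<equiv> det_d G1 QS1"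
abbreviation "F1 \<equiv> det G1"
abbreviation "D2 \<equiv> det_d G2 QS2"
abbreviation "F2 \<equiv> det G2"
abbreviation "T1 \<equiv> transformed D1 F1 (alph G1) (alph G2)"
abbreviation "T2 \<equiv> transformed D2 F2 (alph G2) (alph G1)"
abbreviation "D \<equiv> det_d (sync G1 G2) {(x1, x2). x1 \<in> QS1 \<or> x2 \<in> QS2}"
abbreviation "F \<equiv> det (sync G1 G2)"

definition cinv where
  "cinv q1 q2 \<longleftrightarrow> tpo_reach D1 F1 q1 \<and> tpo_reach D2 F2 q2 \<and> shape (alph G1) (alph G2) q1 q2"

lemma Fs: "dtr F1 f1 e = Some f1' \<Longrightarrow> dtr F2 f2 e = Some f2' \<Longrightarrow> dtr F (f1 \<times> f2) e = Some (f1' \<times> f2')"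
  using det_sync_shared[OF wf1 wf2] by blast
lemma F1: "dtr F1 f1 e = Some f1' \<Longrightarrow> e \<notin> alph G2 \<Longrightarrow> goodF G2 f2 \<Longrightarrow> dtr F (f1 \<times> f2) e = Some (f1' \<times> f2)"
  using det_sync_1[OF wf1 wf2] unfolding goodF_def by blast
lemma F2: "dtr F2 f2 e = Some f2' \<Longrightarrow> e \<notin> alph G1 \<Longrightarrow> goodF G1 f1 \<Longrightarrow> dtr F (f1 \<times> f2) e = Some (f1 \<times> f2')"
  using det_sync_2[OF wf1 wf2] unfolding goodF_def by blast
lemma Ds: "dtr D1 f1 e = Some f1' \<Longrightarrow> dtr D2 f2 e = Some f2' \<Longrightarrow> dtr D (f1 \<times> f2) e = Some (f1' \<times> f2')"
  using detd_sync_shared[OF wf1 wf2] by blast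
lemma D1: "dtr D1 f1 e = Some f1' \<Longrightarrow> e \<notin> alph G2 \<Longrightarrow> goodD G2 QS2 f2 \<Longrightarrow> dtr D (f1 \<times> f2) e = Some (f1' \<times> f2)"
  using detd_sync_1[OF wf1 wf2] unfolding goodD_def by blast
lemma D2: "dtr D2 f2 e = Some f2' \<Longrightarrow> e \<notin> alph G1 \<Longrightarrow> goodD G1 QS1 f1 \<Longrightarrow> dtr D (f1 \<times> f2) e = Some (f1 \<times> f2')"
  using detd_sync_2[OF wf1 wf2] unfolding goodD_def by blast

lemma Fsn: "dtr F1 f1 e = Some a \<Longrightarrow> dtr F2 f2 e = Some b \<Longrightarrow> \<exists>y. dtr F (f1 \<times> f2) e = Some y"
  using Fs by blast
lemma F1n: "dtr F1 f1 e = Some a \<Longrightarrow> e \<notin> alph G2 \<Longrightarrow> goodF G2 f2 \<Longrightarrow> \<exists>y. dtr F (f1 \<times> f2) e = Some y"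
  using F1 by blast
lemma F2n: "dtr F2 f2 e = Some a \<Longrightarrow> e \<notin> alph G1 \<Longrightarrow> goodF G1 f1 \<Longrightarrow> \<exists>y. dtr F (f1 \<times> f2) e = Some y"
  using F2 by blast
lemma Dsn: "dtr D1 f1 e = Some a \<Longrightarrow> dtr D2 f2 e = Some b \<Longrightarrow> \<exists>y. dtr D (f1 \<times> f2) e = Some y"
  using Ds by blast
lemma D1n: "dtr D1 f1 e = Some a \<Longrightarrow> e \<notin> alph G2 \<Longrightarrow> goodD G2 QS2 f2 \<Longrightarrow> \<exists>y. dtr D (f1 \<times> f2) e = Some y"
  using D1 by blast
lemma D2n: "dtr D2 f2 e = Some a \<Longrightarrow> e \<notin> alph G1 \<Longrightarrow> goodD G1 QS1 f1 \<Longrightarrow> \<exists>y. dtr D (f1 \<times> f2) e = Some y"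
  using D2 by blast

lemma good1: "tpo_reach D1 F1 q \<Longrightarrow> goodD G1 QS1 (dc q) \<and> goodF G1 (fc q)"
  using reach_good wf1 nsec1 by blast
lemma good2: "tpo_reach D2 F2 q \<Longrightarrow> goodD G2 QS2 (dc q) \<and> goodF G2 (fc q)"
  using reach_good wf2 nsec2 by blast

lemma step_YY:
  assumes r1: "tpo_reach D1 F1 (YS d1 f1)" and r2: "tpo_reach D2 F2 (YS d2 f2)"
    and tr: "((YS d1 f1, YS d2 f2), Some x, (q1', q2')) \<in> trans (sync T1 T2)"
  shows "cinv q1' q2' \<and> tpo_step D F (YS (d1 \<times> d2) (f1 \<times> f2)) (rho x) (comb q1' q2')"
proof -
  have g1: "goodD G1 QS1 d1" "goodF G1 f1" using good1[OF r1] by auto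
  have g2: "goodD G2 QS2 d2" "goodF G2 f2" using good2[OF r2] by auto
  have rq: "tpo_reach D1 F1 q1'" "tpo_reach D2 F2 q2'"
    using sync_reach[OF tr r1 r2] by auto
  show ?thesis
    using tr r1 r2 rq g1 g2 unfolding sync_trans_Some trans_T_YS step_YS cinv_def
    by (auto simp: alph_GEv intro: Fsn F1n F2n dest: det_alphS)
qed



lemma step_ZZ:
  assumes r1: "tpo_reach D1 F1 (ZS d1 f1 e)" and r2: "tpo_reach D2 F2 (ZS d2 f2 e)"
    and e: "e \<in> alph G1" "e \<in> alph G2"
    and tr: "((ZS d1 f1 e, ZS d2 f2 e), Some x, (q1', q2')) \<in> trans (sync T1 T2)"
  shows "cinv q1' q2' \<and> tpo_step D F (ZS (d1 \<times> d2) (f1 \<times> f2) e) (rho x) (comb q1' q2')"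
proof -
  have g1: "goodD G1 QS1 d1" "goodF G1 f1" using good1[OF r1] by auto
  have g2: "goodD G2 QS2 d2" "goodF G2 f2" using good2[OF r2] by auto
  have rq: "tpo_reach D1 F1 q1'" "tpo_reach D2 F2 q2'"
    using sync_reach[OF tr r1 r2] by auto
  have a1: "\<And>\<theta>. \<theta> \<in> TEv ` alph G1 \<or> \<theta> = TEps \<or> \<theta> \<in> TEra ` alph G1 \<Longrightarrow> GTh \<theta> e \<in> alph T1"
    by (rule alph_GTh1[OF _ r1])
  have a2: "\<And>\<theta>. \<theta> \<in> TEv ` alph G2 \<or> \<theta> = TEps \<or> \<theta> \<in> TEra ` alph G2 \<Longrightarrow> GTh \<theta> e \<in> alph T2"
    by (rule alph_GTh1[OF _ r2])
  from tr consider
      (b) \<theta> where "x = GTh \<theta> e" "tpo_step D1 F1 (ZS d1 f1 e) \<theta> q1'" "tpo_step D2 F2 (ZS d2 f2 e) \<theta> q2'"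
    | (o1) \<theta> where "x = GTh \<theta> e" "tpo_step D1 F1 (ZS d1 f1 e) \<theta> q1'" "x \<notin> alph T2" "q2' = ZS d2 f2 e"
    | (o2) \<theta> where "x = GTh \<theta> e" "tpo_step D2 F2 (ZS d2 f2 e) \<theta> q2'" "x \<notin> alph T1" "q1' = ZS d1 f1 e"
    unfolding sync_trans_Some trans_T_ZS by blast
  then show ?thesis
  proof cases
    case b
    from b(2,3) show ?thesis unfolding step_ZS
      apply (elim disjE exE conjE)
      using b(1) rq e by (auto simp: cinv_def step_ZS intro: Ds Dsn Fsn dest: det_alphS detd_alphS)
  next
    case o1
    from o1(2) show ?thesis unfolding step_ZS
      apply (elim disjE exE conjE)
      using o1(1,3,4) rq e g2 a2 by (auto simp: cinv_def step_ZS intro: D1 dest: det_alphS detd_alphS)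
  next
    case o2
    from o2(2) show ?thesis unfolding step_ZS
      apply (elim disjE exE conjE)
      using o2(1,3,4) rq e g1 a1 by (auto simp: cinv_def step_ZS intro: D2 dest: det_alphS detd_alphS)
  qed
qed


lemma step_ZY:
  assumes r1: "tpo_reach D1 F1 (ZS d1 f1 e)" and r2: "tpo_reach D2 F2 (YS d2 f2)"
    and e: "e \<in> alph G1" "e \<notin> alph G2"
    and tr: "((ZS d1 f1 e, YS d2 f2), Some x, (q1', q2')) \<in> trans (sync T1 T2)"
  shows "cinv q1' q2' \<and> tpo_step D F (ZS (d1 \<times> d2) (f1 \<times> f2) e) (rho x) (comb q1' q2')"
proof -
  have g1: "goodD G1 QS1 d1" "goodF G1 f1" using good1[OF r1] by auto
  have g2: "goodD G2 QS2 d2" "goodF G2 f2" using good2[OF r2] by auto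
  have rq: "tpo_reach D1 F1 q1'" "tpo_reach D2 F2 q2'"
    using sync_reach[OF tr r1 r2] by auto
  have a2: "\<And>\<beta>. \<beta> \<in> alph G1 \<Longrightarrow> \<beta> \<in> alph G2 \<Longrightarrow> GTh (TEv \<beta>) e \<in> alph T2"
    using e by (intro alph_GTh2) auto
  have a1: "\<And>\<alpha>. GEv \<alpha> \<in> alph T1 \<longleftrightarrow> \<alpha> \<in> alph G1 \<or> \<alpha> \<in> alph G2"
    by (simp add: alph_GEv)
  from tr consider
      (o1) \<theta> where "x = GTh \<theta> e" "tpo_step D1 F1 (ZS d1 f1 e) \<theta> q1'" "x \<notin> alph T2" "q2' = YS d2 f2"
    | (o2) \<alpha> where "x = GEv \<alpha>" "tpo_step D2 F2 (YS d2 f2) (TEv \<alpha>) q2' \<or> (q2' = YS d2 f2 \<and> \<alpha> \<in> alph G1)" "x \<notin> alph T1"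
    unfolding sync_trans_Some trans_T_ZS trans_T_YS by auto
  then show ?thesis
  proof cases
    case o1
    from o1(2) show ?thesis unfolding step_ZS
      apply (elim disjE exE conjE)
      using o1(1,3,4) rq e g2 a2 by (auto simp: cinv_def step_ZS intro: D1 D1n F1n dest: det_alphS detd_alphS)
  next
    case o2
    then show ?thesis using a1 by (auto simp: step_YS dest: det_alphS)
  qed
qed

lemma step_YZ:
  assumes r1: "tpo_reach D1 F1 (YS d1 f1)" and r2: "tpo_reach D2 F2 (ZS d2 f2 e)"
    and e: "e \<in> alph G2" "e \<notin> alph G1"
    and tr: "((YS d1 f1, ZS d2 f2 e), Some x, (q1', q2')) \<in> trans (sync T1 T2)"
  shows "cinv q1' q2' \<and> tpo_step D F (ZS (d1 \<times> d2) (f1 \<times> f2) e) (rho x) (comb q1' q2')"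
proof -
  have g1: "goodD G1 QS1 d1" "goodF G1 f1" using good1[OF r1] by auto
  have g2: "goodD G2 QS2 d2" "goodF G2 f2" using good2[OF r2] by auto
  have rq: "tpo_reach D1 F1 q1'" "tpo_reach D2 F2 q2'"
    using sync_reach[OF tr r1 r2] by auto
  have a1: "\<And>\<beta>. \<beta> \<in> alph G1 \<Longrightarrow> \<beta> \<in> alph G2 \<Longrightarrow> GTh (TEv \<beta>) e \<in> alph T1"
    using e by (intro alph_GTh2) auto
  have a2: "\<And>\<alpha>. GEv \<alpha> \<in> alph T2 \<longleftrightarrow> \<alpha> \<in> alph G1 \<or> \<alpha> \<in> alph G2"
    by (auto simp add: alph_GEv)
  from tr consider
      (o2) \<theta> where "x = GTh \<theta> e" "tpo_step D2 F2 (ZS d2 f2 e) \<theta> q2'" "x \<notin> alph T1" "q1' = YS d1 f1"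
    | (o1) \<alpha> where "x = GEv \<alpha>" "tpo_step D1 F1 (YS d1 f1) (TEv \<alpha>) q1' \<or> (q1' = YS d1 f1 \<and> \<alpha> \<in> alph G2)" "x \<notin> alph T2"
    unfolding sync_trans_Some trans_T_ZS trans_T_YS by auto
  then show ?thesis
  proof cases
    case o2
    from o2(2) show ?thesis unfolding step_ZS
      apply (elim disjE exE conjE)
      using o2(1,3,4) rq e g1 a1 by (auto simp: cinv_def step_ZS intro: D2 D2n F2n dest: det_alphS detd_alphS)
  next
    case o1
    then show ?thesis using a2 by (auto simp: step_YS dest: det_alphS)
  qed
qed

lemma step_WW:
  assumes r1: "tpo_reach D1 F1 (WS d1 f1 a)" and r2: "tpo_reach D2 F2 (WS d2 f2 a)"
    and e: "aev a \<in> alph G1" "aev a \<in> alph G2"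
    and tr: "((WS d1 f1 a, WS d2 f2 a), Some x, (q1', q2')) \<in> trans (sync T1 T2)"
  shows "cinv q1' q2' \<and> tpo_step D F (WS (d1 \<times> d2) (f1 \<times> f2) a) (rho x) (comb q1' q2')"
proof -
  have g1: "goodD G1 QS1 d1" "goodF G1 f1" using good1[OF r1] by auto
  have g2: "goodD G2 QS2 d2" "goodF G2 f2" using good2[OF r2] by auto
  have rq: "tpo_reach D1 F1 q1'" "tpo_reach D2 F2 q2'"
    using sync_reach[OF tr r1 r2] by auto
  have a1: "\<And>\<sigma>. \<sigma> \<in> alph G1 \<Longrightarrow> GSa \<sigma> a \<in> alph T1"
    by (rule alph_GSa[OF _ r1])
  have a2: "\<And>\<sigma>. \<sigma> \<in> alph G2 \<Longrightarrow> GSa \<sigma> a \<in> alph T2"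
    by (rule alph_GSa[OF _ r2])
  from tr consider
      (b) \<sigma> where "x = GSa \<sigma> a" "tpo_step D1 F1 (WS d1 f1 a) (TEv \<sigma>) q1'" "tpo_step D2 F2 (WS d2 f2 a) (TEv \<sigma>) q2'"
    | (o1) \<sigma> where "x = GSa \<sigma> a" "tpo_step D1 F1 (WS d1 f1 a) (TEv \<sigma>) q1'" "x \<notin> alph T2"
    | (o2) \<sigma> where "x = GSa \<sigma> a" "tpo_step D2 F2 (WS d2 f2 a) (TEv \<sigma>) q2'" "x \<notin> alph T1"
    unfolding sync_trans_Some trans_T_WS by blast
  then show ?thesis
  proof cases
    case b
    from b(2,3) show ?thesis unfolding step_WS
      apply (elim disjE exE conjE)
      using b(1) rq e by (auto simp: cinv_def step_WS intro: Ds Fs)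
  next
    case o1
    from o1(2) show ?thesis unfolding step_WS
      apply (elim disjE exE conjE)
      using o1(1,3) e a2 by auto
  next
    case o2
    from o2(2) show ?thesis unfolding step_WS
      apply (elim disjE exE conjE)
      using o2(1,3) e a1 by auto
  qed
qed

lemma step_WY:
  assumes r1: "tpo_reach D1 F1 (WS d1 f1 a)" and r2: "tpo_reach D2 F2 (YS d2 f2)"
    and e: "aev a \<in> alph G1" "aev a \<notin> alph G2"
    and tr: "((WS d1 f1 a, YS d2 f2), Some x, (q1', q2')) \<in> trans (sync T1 T2)"
  shows "cinv q1' q2' \<and> tpo_step D F (WS (d1 \<times> d2) (f1 \<times> f2) a) (rho x) (comb q1' q2')"
proof -
  have g1: "goodD G1 QS1 d1" "goodF G1 f1" using good1[OF r1] by auto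
  have g2: "goodD G2 QS2 d2" "goodF G2 f2" using good2[OF r2] by auto
  have rq: "tpo_reach D1 F1 q1'" "tpo_reach D2 F2 q2'"
    using sync_reach[OF tr r1 r2] by auto
  have a1: "\<And>\<alpha>. GEv \<alpha> \<in> alph T1 \<longleftrightarrow> \<alpha> \<in> alph G1 \<or> \<alpha> \<in> alph G2"
    by (simp add: alph_GEv)
  from tr consider
      (o1) \<sigma> where "x = GSa \<sigma> a" "tpo_step D1 F1 (WS d1 f1 a) (TEv \<sigma>) q1'" "q2' = YS d2 f2"
    | (o2) \<alpha> where "x = GEv \<alpha>" "tpo_step D2 F2 (YS d2 f2) (TEv \<alpha>) q2' \<or> (q2' = YS d2 f2 \<and> \<alpha> \<in> alph G1)" "x \<notin> alph T1"
    unfolding sync_trans_Some trans_T_WS trans_T_YS by auto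
  then show ?thesis
  proof cases
    case o1
    from o1(2) show ?thesis unfolding step_WS
      apply (elim disjE exE conjE)
      using o1(1,3) rq e g2 by (auto simp: cinv_def step_WS intro: D1 F1)
  next
    case o2
    then show ?thesis using a1 by (auto simp: step_YS dest: det_alphS)
  qed
qed

lemma step_YW:
  assumes r1: "tpo_reach D1 F1 (YS d1 f1)" and r2: "tpo_reach D2 F2 (WS d2 f2 a)"
    and e: "aev a \<in> alph G2" "aev a \<notin> alph G1"
    and tr: "((YS d1 f1, WS d2 f2 a), Some x, (q1', q2')) \<in> trans (sync T1 T2)"
  shows "cinv q1' q2' \<and> tpo_step D F (WS (d1 \<times> d2) (f1 \<times> f2) a) (rho x) (comb q1' q2')"
proof -
  have g1: "goodD G1 QS1 d1" "goodF G1 f1" using good1[OF r1] by auto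
  have g2: "goodD G2 QS2 d2" "goodF G2 f2" using good2[OF r2] by auto
  have rq: "tpo_reach D1 F1 q1'" "tpo_reach D2 F2 q2'"
    using sync_reach[OF tr r1 r2] by auto
  have a2: "\<And>\<alpha>. GEv \<alpha> \<in> alph T2 \<longleftrightarrow> \<alpha> \<in> alph G1 \<or> \<alpha> \<in> alph G2"
    by (auto simp add: alph_GEv)
  from tr consider
      (o2) \<sigma> where "x = GSa \<sigma> a" "tpo_step D2 F2 (WS d2 f2 a) (TEv \<sigma>) q2'" "q1' = YS d1 f1"
    | (o1) \<alpha> where "x = GEv \<alpha>" "tpo_step D1 F1 (YS d1 f1) (TEv \<alpha>) q1' \<or> (q1' = YS d1 f1 \<and> \<alpha> \<in> alph G2)" "x \<notin> alph T2"
    unfolding sync_trans_Some trans_T_WS trans_T_YS by auto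
  then show ?thesis
  proof cases
    case o2
    from o2(2) show ?thesis unfolding step_WS
      apply (elim disjE exE conjE)
      using o2(1,3) rq e g1 by (auto simp: cinv_def step_WS intro: D2 F2)
  next
    case o1
    then show ?thesis using a2 by (auto simp: step_YS dest: det_alphS)
  qed
qed


lemma step_all:
  assumes inv: "cinv q1 q2" and tr: "((q1,q2), Some x, (q1',q2')) \<in> trans (sync T1 T2)"
  shows "cinv q1' q2' \<and> tpo_step D F (comb q1 q2) (rho x) (comb q1' q2')"
proof -
  have r1: "tpo_reach D1 F1 q1" and r2: "tpo_reach D2 F2 q2" and sh: "shape (alph G1) (alph G2) q1 q2"
    using inv by (auto simp: cinv_def)
  show ?thesis
  proof (cases q1)
    case (YS d1 f1)
    show ?thesis
    proof (cases q2)
      case (YS d2 f2) then show ?thesis using step_YY r1 r2 tr \<open>q1 = _\<close> by simp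
    next
      case (ZS d2 f2 e) then show ?thesis using step_YZ r1 r2 tr sh \<open>q1 = _\<close> by simp
    next
      case (WS d2 f2 a) then show ?thesis using step_YW r1 r2 tr sh \<open>q1 = _\<close> by simp
    qed
  next
    case (ZS d1 f1 e)
    show ?thesis
    proof (cases q2)
      case (YS d2 f2) then show ?thesis using step_ZY r1 r2 tr sh \<open>q1 = _\<close> by simp
    next
      case (ZS d2 f2 e') then show ?thesis using step_ZZ[of d1 f1 e d2 f2 x q1' q2'] r1 r2 tr sh \<open>q1 = _\<close> by auto
    next
      case (WS d2 f2 a) then show ?thesis using sh \<open>q1 = _\<close> by simp
    qed
  next
    case (WS d1 f1 a)
    show ?thesis
    proof (cases q2)
      case (YS d2 f2) then show ?thesis using step_WY r1 r2 tr sh \<open>q1 = _\<close> by simp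
    next
      case (ZS d2 f2 e') then show ?thesis using sh \<open>q1 = _\<close> by simp
    next
      case (WS d2 f2 a') then show ?thesis using step_WW[of d1 f1 a d2 f2 x q1' q2'] r1 r2 tr sh \<open>q1 = _\<close> by auto
    qed
  qed
qed

lemma run_sim:
  "nfa_run (sync T1 T2) p s q \<Longrightarrow> cinv (fst p) (snd p) \<Longrightarrow>
   \<exists>r. tpo_run D F (comb (fst p) (snd p)) (map rho s) r"
proof (induction rule: nfa_run.induct)
  case (run_nil p)
  then show ?case by (auto intro: tpo_run.tr_nil)
next
  case (run_tau p p' w q)
  then show ?case using sync_trans_None trans_T_None by metis
next
  case (run_ev p a p' w q)
  obtain p1 p2 p1' p2' where pp: "p = (p1,p2)" "p' = (p1',p2')" by force
  have "cinv p1' p2' \<and> tpo_step D F (comb p1 p2) (rho a) (comb p1' p2')"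
    using step_all run_ev pp by auto
  then show ?case using run_ev pp by (auto intro: tpo_run.tr_cons)
qed

lemma init_ok:
  "cinv (tpo_init D1 F1) (tpo_init D2 F2) \<and> comb (tpo_init D1 F1) (tpo_init D2 F2) = tpo_init D F"
proof -
  have "init G1 \<subseteq> states G1" "init G2 \<subseteq> states G2" using wf1 wf2 unfolding wf_nfa_def by auto
  then have "UR (sync G1 G2) (init G1 \<times> init G2) = UR G1 (init G1) \<times> UR G2 (init G2)"
    using UR_sync wf1 wf2 by blast
  moreover have "dinit (det_d G QS) = UR G (init G)" "dinit (det G) = UR G (init G)" for G :: "('a,'e) nfa" and QS
    by (simp_all add: det_d_def det_def)
  moreover have "init (sync G1 G2) = init G1 \<times> init G2" by (simp add: sync_def)
  moreover have "tpo_reach D1 F1 (tpo_init D1 F1)" "tpo_reach D2 F2 (tpo_init D2 F2)"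
    by (rule tpo_reach.r_init)+
  ultimately show ?thesis
    by (simp add: cinv_def tpo_init_def det_d_def det_def)
qed

end


theorem theorem4:
  fixes G1 :: "('q1, 'e) nfa" and G2 :: "('q2, 'e) nfa"
    and QS1 :: "'q1 set" and QS2 :: "'q2 set"
    and s :: "'e gsym list"
  assumes wf1: "wf_nfa G1" and wf2: "wf_nfa G2"
    and sec1: "QS1 \<subseteq> states G1" and sec2: "QS2 \<subseteq> states G2"
    and nsec1: "\<not> UR G1 (init G1) \<subseteq> QS1"
    and nsec2: "\<not> UR G2 (init G2) \<subseteq> QS2"
    and s_alph: "set s \<subseteq> alph (transformed (det_d G1 QS1) (det G1) (alph G1) (alph G2))
                          \<union> alph (transformed (det_d G2 QS2) (det G2) (alph G2) (alph G1))"
    and q0: "q0 \<in> init (sync (transformed (det_d G1 QS1) (det G1) (alph G1) (alph G2))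
                              (transformed (det_d G2 QS2) (det G2) (alph G2) (alph G1)))"
    and run: "nfa_run (sync (transformed (det_d G1 QS1) (det G1) (alph G1) (alph G2))
                            (transformed (det_d G2 QS2) (det G2) (alph G2) (alph G1))) q0 s q"
  shows "\<exists>r. tpo_run (det_d (sync G1 G2) {(x1, x2). x1 \<in> QS1 \<or> x2 \<in> QS2}) (det (sync G1 G2))
              (tpo_init (det_d (sync G1 G2) {(x1, x2). x1 \<in> QS1 \<or> x2 \<in> QS2}) (det (sync G1 G2)))
              (map rho s) r"
  proof -
  interpret ctx G1 G2 QS1 QS2 using wf1 wf2 nsec1 nsec2 by unfold_locales
  have "q0 = (tpo_init (det_d G1 QS1) (det G1), tpo_init (det_d G2 QS2) (det G2))"
    using q0 by (simp add: sync_def transformed_def)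
  then show ?thesis using run_sim[OF run] init_ok by auto
qed

end
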